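(* Let $\mathcal{C}\subseteq\mathbb{F}_q^n$ be a linear code of length $n$ with covering radius $\rho$, and let $j$ be a positive integer with $j\le\rho$. Define $$\mathcal{Y}_j=\{\mathbf{y}\in\mathbb{F}_q^n : d(\mathbf{y},\mathcal{C})\ge\rho-j\},$$ $$\mathcal{E}_j=\{\mathbf{y}-\mathbf{c} : \mathbf{y}\in\mathcal{Y}_j,\ \mathbf{c}\in\mathcal{C},\ d(\mathbf{y},\mathbf{c})=d(\mathbf{y},\mathcal{C})\},$$ $$P_j=\bigcap_{\mathbf{e}\in\mathcal{E}_j}\mathrm{supp}(\mathbf{e}).$$ Let $\mathcal{C}_j'\subseteq\mathbb{F}_q^{n-|P_j|}$ be the code obtained by puncturing $\mathcal{C}$ at the positions of $P_j$. Then the covering radius $\rho_j'$ of $\mathcal{C}_j'$ satisfies $$\rho_j'\le\max\{\rho-j-1,\ \rho-|P_j|\}.$$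
   Context: $d$ denotes the Hamming distance and $d(\mathbf{y},\mathcal{C})=\min_{\mathbf{c}\in\mathcal{C}}d(\mathbf{y},\mathbf{c})$. The covering radius of a code $\mathcal{C}\subseteq\mathbb{F}_q^N$ is $\max_{\mathbf{y}\in\mathbb{F}_q^N}d(\mathbf{y},\mathcal{C})$. $\mathrm{supp}(\mathbf{e})$ is the set of coordinates where $\mathbf{e}$ is nonzero. Puncturing $\mathcal{C}$ at a set of positions $P$ means deleting the coordinates indexed by $P$ from every codeword, giving the code $\pi_{\{1,\dots,n\}\setminus P}(\mathcal{C})\subseteq\mathbb{F}_q^{n-|P|}$. *)

theory Defs
  imports Main
begin

text \<open>Words over the alphabet 'a indexed by a finite coordinate set I
  (coordinates outside I are zero).  F_q^n is words over I = {0..<n}.\<close>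

definition words :: "nat set \<Rightarrow> (nat \<Rightarrow> 'a::zero) set" where
  "words I = {x. \<forall>i. i \<notin> I \<longrightarrow> x i = 0}"

definition hdist :: "nat set \<Rightarrow> (nat \<Rightarrow> 'a) \<Rightarrow> (nat \<Rightarrow> 'a) \<Rightarrow> nat" where
  "hdist I x y = card {i \<in> I. x i \<noteq> y i}"

definition linear_code :: "nat set \<Rightarrow> (nat \<Rightarrow> 'a::field) set \<Rightarrow> bool" where
  "linear_code I C \<longleftrightarrow> C \<subseteq> words I \<and> (\<lambda>i. 0) \<in> C \<and>
     (\<forall>x\<in>C. \<forall>y\<in>C. (\<lambda>i. x i + y i) \<in> C) \<and>
     (\<forall>a. \<forall>x\<in>C. (\<lambda>i. a * x i) \<in> C)"

definition dist_code :: "nat set \<Rightarrow> (nat \<Rightarrow> 'a) set \<Rightarrow> (nat \<Rightarrow> 'a) \<Rightarrow> nat" where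
  "dist_code I C y = Min ((\<lambda>c. hdist I y c) ` C)"

definition covering_radius :: "nat set \<Rightarrow> (nat \<Rightarrow> 'a::zero) set \<Rightarrow> nat" where
  "covering_radius I C = Max ((\<lambda>y. dist_code I C y) ` words I)"

definition supp :: "(nat \<Rightarrow> 'a::zero) \<Rightarrow> nat set" where
  "supp e = {i. e i \<noteq> 0}"

text \<open>Puncturing at P: delete the coordinates in P, i.e. restrict to I - P.\<close>
definition puncture :: "nat set \<Rightarrow> nat set \<Rightarrow> (nat \<Rightarrow> 'a::zero) set \<Rightarrow> (nat \<Rightarrow> 'a) set" where
  "puncture I P C = (\<lambda>c i. if i \<in> I - P then c i else 0) ` C"

end

theory Submission
  imports Defs "HOL-Library.FuncSet"
begin

lemma finite_words:
  assumes "finite I"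
  shows "finite (words I :: (nat \<Rightarrow> 'a::{zero,finite}) set)"
proof -
  have "words I \<subseteq> (\<lambda>f i. if i \<in> I then f i else 0) ` (PiE I (\<lambda>_. (UNIV::'a set)))"
  proof
    fix x :: "nat \<Rightarrow> 'a" assume "x \<in> words I"
    hence x: "\<forall>i. i \<notin> I \<longrightarrow> x i = 0" by (simp add: words_def)
    have "restrict x I \<in> PiE I (\<lambda>_. UNIV)" unfolding PiE_def Pi_def by auto
    moreover have "x = (\<lambda>i. if i \<in> I then restrict x I i else 0)"
      using x by (auto simp: fun_eq_iff)
    ultimately show "x \<in> (\<lambda>f i. if i \<in> I then f i else 0) ` (PiE I (\<lambda>_. (UNIV::'a set)))"
      by blast
  qed
  moreover have "finite (PiE I (\<lambda>_. (UNIV::'a set)))"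
    using assms by (intro finite_PiE) auto
  ultimately show ?thesis using finite_subset by blast
qed

theorem proposition2:
  fixes C :: "(nat \<Rightarrow> 'a::{field,finite}) set" and n j :: nat
  assumes "linear_code {0..<n} C"
    and "0 < j" and "j \<le> covering_radius {0..<n} C"
  defines "\<rho> \<equiv> covering_radius {0..<n} C"
  defines "Y \<equiv> {y \<in> words {0..<n}. dist_code {0..<n} C y \<ge> \<rho> - j}"
  defines "E \<equiv> {e. \<exists>y\<in>Y. \<exists>c\<in>C. hdist {0..<n} y c = dist_code {0..<n} C y
                        \<and> e = (\<lambda>i. y i - c i)}"
  defines "P \<equiv> \<Inter>e\<in>E. supp e"
  shows "int (covering_radius ({0..<n} - P) (puncture {0..<n} P C))
           \<le> max (int \<rho> - int j - 1) (int \<rho> - int (card P))"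
proof -
  define I' where "I' = {0..<n} - P"
  define C' where "C' = puncture {0..<n} P C"
  have Cw: "C \<subseteq> words {0..<n}" and C0: "(\<lambda>i. 0) \<in> C"
    using assms(1) by (auto simp: linear_code_def)
  have fW: "finite (words {0..<n} :: (nat \<Rightarrow> 'a) set)" by (rule finite_words) simp
  have fC: "finite C" using Cw fW finite_subset by blast
  have fW': "finite (words I' :: (nat \<Rightarrow> 'a) set)" by (rule finite_words) (simp add: I'_def)
  have W'ne: "(\<lambda>i. 0) \<in> (words I' :: (nat \<Rightarrow> 'a) set)" by (simp add: words_def)
  have fC': "finite C'" using fC by (simp add: C'_def puncture_def)
  obtain y where yW': "y \<in> words I'" and ymax: "covering_radius I' C' = dist_code I' C' y"
  proof -
    have "covering_radius I' C' \<in> (\<lambda>y. dist_code I' C' y) ` words I'"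
      unfolding covering_radius_def using fW' W'ne by (intro Max_in) auto
    thus ?thesis using that by blast
  qed
  have yW: "y \<in> words {0..<n}" using yW' by (auto simp: words_def I'_def)
  obtain c where cC: "c \<in> C" and cmin: "hdist {0..<n} y c = dist_code {0..<n} C y"
  proof -
    have "dist_code {0..<n} C y \<in> (\<lambda>c. hdist {0..<n} y c) ` C"
      unfolding dist_code_def using fC C0 by (intro Max_in Min_in) auto
    thus ?thesis using that by (metis imageE)
  qed
  have dle: "dist_code {0..<n} C y \<le> \<rho>"
    unfolding \<rho>_def covering_radius_def using fW yW by (intro Max_ge) auto
  define pc where "pc = (\<lambda>i. if i \<in> I' then c i else 0)"
  have pcC': "pc \<in> C'" using cC by (auto simp: C'_def puncture_def pc_def I'_def)
  have h1: "dist_code I' C' y \<le> hdist I' y pc"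
    unfolding dist_code_def using fC' pcC' by (intro Min_le) auto
  have h2: "hdist I' y pc = card {i \<in> I'. y i \<noteq> c i}"
    unfolding hdist_def pc_def by (rule arg_cong[where f=card]) auto
  have split: "{i \<in> {0..<n}. y i \<noteq> c i} = {i \<in> I'. y i \<noteq> c i} \<union> {i \<in> {0..<n} \<inter> P. y i \<noteq> c i}"
    by (auto simp: I'_def)
  have cardsplit: "hdist {0..<n} y c = card {i \<in> I'. y i \<noteq> c i} + card {i \<in> {0..<n} \<inter> P. y i \<noteq> c i}"
    unfolding hdist_def split by (rule card_Un_disjoint) (auto simp: I'_def)
  show ?thesis
  proof (cases "dist_code {0..<n} C y \<ge> \<rho> - j")
    case False
    hence "hdist I' y pc \<le> \<rho> - j - 1" using cmin cardsplit h2 by linarith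
    hence "int (covering_radius I' C') \<le> int \<rho> - int j - 1"
      using h1 ymax False by linarith
    thus ?thesis by (simp add: I'_def C'_def)
  next
    case True
    hence "y \<in> Y" using yW by (simp add: Y_def)
    hence "(\<lambda>i. y i - c i) \<in> E" using cC cmin by (auto simp: E_def)
    hence Ps: "P \<subseteq> supp (\<lambda>i. y i - c i)" unfolding P_def by blast
    have "supp (\<lambda>i. y i - c i) \<subseteq> {0..<n}"
      using yW cC Cw by (force simp: supp_def words_def)
    with Ps have Pn: "P \<subseteq> {0..<n}" by blast
    have "{i \<in> {0..<n} \<inter> P. y i \<noteq> c i} = P"
      using Ps Pn by (auto simp: supp_def)
    hence "hdist {0..<n} y c = hdist I' y pc + card P" using cardsplit h2 by simp
    hence "int (covering_radius I' C') \<le> int \<rho> - int (card P)"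
      using h1 ymax cmin dle by linarith
    thus ?thesis by (simp add: I'_def C'_def)
  qed
qed

end
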